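(* Let $X\in\mathbb{R}^d$, $Y\in\mathbb{R}$, $H\in\mathbb{R}^q$, $I\in\mathbb{R}^m$ be generated by the linear structural causal model $$X := BX + AI + h(H,\epsilon^X),\qquad Y := X^\top\beta^* + g(H,\epsilon^Y),$$ where $B\in\mathbb{R}^{d\times d}$ with $\operatorname{Id}-B$ invertible, $A\in\mathbb{R}^{d\times m}$, $\beta^*\in\mathbb{R}^d$, $h,g$ are arbitrary measurable functions, $I,H,\epsilon^X,\epsilon^Y$ are jointly independent, and $\operatorname{Cov}[I]$ is invertible. Let $C:=A^\top(\operatorname{Id}-B)^{-\top}\in\mathbb{R}^{m\times d}$, $\operatorname{PA}(Y):=\{j:\beta^*_j\neq 0\}$, and $\mathcal{B}:=\{\beta\in\mathbb{R}^d : \operatorname{Cov}(I,X)\beta=\operatorname{Cov}(I,Y)\}$. Consider the assumptions (A1) $\operatorname{rank}(C_{\operatorname{PA}(Y)})=|\operatorname{PA}(Y)|$; (A2) for all $S\subseteq\{1,\dots,d\}$: if $\operatorname{rank}(C_S)\le\operatorname{rank}(C_{\operatorname{PA}(Y)})$ and $\operatorname{im}(C_S)\neq\operatorname{im}(C_{\operatorname{PA}(Y)})$, then $C_S w\neq C_{\operatorname{PA}(Y)}\beta^*_{\operatorname{PA}(Y)}$ for all $w\in\mathbb{R}^{|S|}$; (A3) for all $S\subseteq\{1,\dots,d\}$ with $|S|=|\operatorname{PA}(Y)|$ and $S\neq\operatorname{PA}(Y)$, $\operatorname{im}(C_S)\neq\operatorname{im}(C_{\operatorname{PA}(Y)})$.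 If (A1) and (A2) hold, then $\beta^*$ is a solution of $\min_{\beta\in\mathcal{B}}\|\beta\|_0$. If in addition (A3) holds, then $\beta^*$ is the unique solution of this problem.
   Context: For a matrix $D\in\mathbb{R}^{m\times d}$ and $S\subseteq\{1,\dots,d\}$, $D_S$ is the $m\times|S|$ submatrix consisting of the columns indexed by $S$, and $\operatorname{im}(D)$ is the image (column space) of $D$. For a vector $v$, $v_S$ is the subvector indexed by $S$. $\|\beta\|_0$ is the number of non-zero entries of $\beta$. All covariances involved are assumed to exist. *)

theory Defs
  imports "HOL-Probability.Probability"
begin

text \<open>Joint (mutual) independence of four random variables taking values in
  possibly different measurable spaces; this is literally the definition of
  indep_vars, specialised to an index set of four elements (indep_vars itself
  needs a common value type).\<close>
definition (in prob_space) indep4 ::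
  "'b1 measure \<Rightarrow> ('a \<Rightarrow> 'b1) \<Rightarrow> 'b2 measure \<Rightarrow> ('a \<Rightarrow> 'b2) \<Rightarrow>
   'b3 measure \<Rightarrow> ('a \<Rightarrow> 'b3) \<Rightarrow> 'b4 measure \<Rightarrow> ('a \<Rightarrow> 'b4) \<Rightarrow> bool" where
  "indep4 N1 X1 N2 X2 N3 X3 N4 X4 \<longleftrightarrow>
     random_variable N1 X1 \<and> random_variable N2 X2 \<and>
     random_variable N3 X3 \<and> random_variable N4 X4 \<and>
     indep_sets (\<lambda>i::nat.
        if i = 0 then { X1 -` A \<inter> space M | A. A \<in> sets N1}
        else if i = 1 then { X2 -` A \<inter> space M | A. A \<in> sets N2}
        else if i = 2 then { X3 -` A \<inter> space M | A. A \<in> sets N3}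
        else { X4 -` A \<inter> space M | A. A \<in> sets N4}) {0,1,2,3}"

definition cross_cov :: "'w measure \<Rightarrow> ('w \<Rightarrow> real^'m) \<Rightarrow> ('w \<Rightarrow> real^'n) \<Rightarrow> real^'n^'m" where
  "cross_cov M U V = (\<chi> i j. integral\<^sup>L M (\<lambda>\<omega>.
      (U \<omega> $ i - integral\<^sup>L M (\<lambda>\<omega>. U \<omega> $ i)) * (V \<omega> $ j - integral\<^sup>L M (\<lambda>\<omega>. V \<omega> $ j))))"

definition cross_cov_vec :: "'w measure \<Rightarrow> ('w \<Rightarrow> real^'m) \<Rightarrow> ('w \<Rightarrow> real) \<Rightarrow> real^'m" where
  "cross_cov_vec M U Y = (\<chi> i. integral\<^sup>L M (\<lambda>\<omega>.
      (U \<omega> $ i - integral\<^sup>L M (\<lambda>\<omega>. U \<omega> $ i)) * (Y \<omega> - integral\<^sup>L M Y)))"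

text \<open>Image of the column submatrix C_S: {C_S w | w in R^|S|}, where C_S w is
  written as C applied to the zero-extension of w to all indices.\<close>
definition sub_im :: "real^'d^'m \<Rightarrow> 'd set \<Rightarrow> (real^'m) set" where
  "sub_im C S = {C *v w | w. \<forall>j. j \<notin> S \<longrightarrow> w $ j = 0}"

definition sub_rank :: "real^'d^'m \<Rightarrow> 'd set \<Rightarrow> nat" where
  "sub_rank C S = dim (sub_im C S)"

definition restr :: "'d set \<Rightarrow> real^'d \<Rightarrow> real^'d" where
  "restr S v = (\<chi> j. if j \<in> S then v $ j else 0)"

definition supp_vec :: "real^'d \<Rightarrow> 'd set" where
  "supp_vec v = {j. v $ j \<noteq> 0}"

definition l0 :: "real^'d \<Rightarrow> nat" where
  "l0 v = card (supp_vec v)"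

end

theory Submission imports Defs begin

lemma (in prob_space) indep_comp:
  fixes E :: "nat \<Rightarrow> 'a set set" and U :: "'a \<Rightarrow> 'u" and V :: "'a \<Rightarrow> 'v" and W :: "'a \<Rightarrow> 'x"
  assumes ind: "indep_sets E K" and abc: "a \<in> K" "b \<in> K" "c \<in> K" "a \<noteq> b" "a \<noteq> c"
    and Ea: "E a = {U -` A \<inter> space M | A. A \<in> sets N0}"
    and Eb: "E b = {V -` A \<inter> space M | A. A \<in> sets N1}"
    and Ec: "E c = {W -` A \<inter> space M | A. A \<in> sets N2}"
    and rU: "random_variable N0 U" and rV: "random_variable N1 V" and rW: "random_variable N2 W"
    and f: "f \<in> borel_measurable N0" and k: "k \<in> borel_measurable (N1 \<Otimes>\<^sub>M N2)"
    and iU: "integrable M (\<lambda>\<omega>. f (U \<omega>) :: real)" and iV: "integrable M (\<lambda>\<omega>. k (V \<omega>, W \<omega>) :: real)"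
  shows "(\<integral>\<omega>. f (U \<omega>) * k (V \<omega>, W \<omega>) \<partial>M) = (\<integral>\<omega>. f (U \<omega>) \<partial>M) * (\<integral>\<omega>. k (V \<omega>, W \<omega>) \<partial>M)"
proof -
  define II where "II = (\<lambda>j. if j = a then {a} else {b, c})"
  have un: "(\<Union>j\<in>{a,b}. II j) = {a,b,c}" using abc by (auto simp: II_def)
  have ind3: "indep_sets E (\<Union>j\<in>{a,b}. II j)" unfolding un
    by (rule indep_sets_mono_index[OF _ ind]) (use abc in auto)
  have ist: "Int_stable {Z -` A \<inter> space M | A. A \<in> sets N}" for Z :: "'a \<Rightarrow> 'z" and N
    unfolding Int_stable_def
    by (auto, rule_tac x="A \<inter> Aa" in exI, auto)
  have ind2: "indep_sets (\<lambda>j. sigma_sets (space M) (\<Union>i\<in>II j. E i)) {a,b}"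
  proof (rule indep_sets_collect_sigma[OF ind3])
    show "Int_stable (E i)" if "j \<in> {a,b}" "i \<in> II j" for i j
      using that abc by (auto simp: II_def Ea Eb Ec ist)
    show "disjoint_family_on II {a, b}"
      using abc by (auto simp: disjoint_family_on_def II_def)
  qed
  define Z where "Z = (\<lambda>j \<omega>. if j = a then f (U \<omega>) else k (V \<omega>, W \<omega>))"
  define M' where "M' = sigma (space M) (E b \<union> E c)"
  have EbcP: "E b \<union> E c \<subseteq> Pow (space M)" by (auto simp: Eb Ec)
  have spM': "space M' = space M" unfolding M'_def using EbcP by simp
  have setsM': "sets M' = sigma_sets (space M) (E b \<union> E c)" unfolding M'_def using EbcP by simp
  have VM': "V \<in> measurable M' N1"
    unfolding measurable_def using rV spM' setsM' Eb
    by (auto simp: measurable_def intro!: sigma_sets.Basic)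
  have WM': "W \<in> measurable M' N2"
    unfolding measurable_def using rW spM' setsM' Ec
    by (auto simp: measurable_def intro!: sigma_sets.Basic)
  have kM': "(\<lambda>\<omega>. k (V \<omega>, W \<omega>)) \<in> borel_measurable M'"
    using measurable_compose[OF measurable_Pair[OF VM' WM'] k] by simp
  have rZ: "random_variable borel (Z j)" if "j \<in> {a,b}" for j
    using that abc rU f iV unfolding Z_def by auto
  have indZ: "indep_vars (\<lambda>_. borel) Z {a,b}"
    unfolding indep_vars_def2
  proof (intro conjI ballI rZ)
    show "indep_sets (\<lambda>i. {Z i -` A \<inter> space M |A. A \<in> sets borel}) {a, b}"
    proof (rule indep_sets_mono_sets[OF ind2])
      fix j assume j: "j \<in> {a,b}"
      show "{Z j -` A \<inter> space M |A. A \<in> sets borel} \<subseteq> sigma_sets (space M) (\<Union> (E ` II j))"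
      proof (cases "j = a")
        case True
        show ?thesis
        proof
          fix S assume "S \<in> {Z j -` A \<inter> space M |A. A \<in> sets borel}"
          then obtain A where A: "A \<in> sets borel" "S = Z j -` A \<inter> space M" by auto
          have "S = U -` (f -` A \<inter> space N0) \<inter> space M"
            using A True rU by (auto simp: Z_def measurable_def)
          moreover have "f -` A \<inter> space N0 \<in> sets N0" using f A by auto
          ultimately have "S \<in> E a" unfolding Ea by blast
          then show "S \<in> sigma_sets (space M) (\<Union> (E ` II j))"
            using True by (auto simp: II_def intro: sigma_sets.Basic)
        qed
      next
        case False
        then have jb: "j = b" using j by auto
        show ?thesis
        proof
          fix S assume "S \<in> {Z j -` A \<inter> space M |A. A \<in> sets borel}"
          then obtain A where A: "A \<in> sets borel" "S = Z j -` A \<inter> space M" by auto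
          have "S = (\<lambda>\<omega>. k (V \<omega>, W \<omega>)) -` A \<inter> space M'"
            using A False spM' by (auto simp: Z_def)
          also have "\<dots> \<in> sets M'" using kM' A by auto
          finally show "S \<in> sigma_sets (space M) (\<Union> (E ` II j))"
            using jb abc setsM' by (simp add: II_def)
        qed
      qed
    qed
  qed
  have "(\<integral>\<omega>. (\<Prod>i\<in>{a,b}. Z i \<omega>) \<partial>M) = (\<Prod>i\<in>{a,b}. \<integral>\<omega>. Z i \<omega> \<partial>M)"
    by (rule indep_vars_lebesgue_integral[OF _ indZ]) (use iU iV abc in \<open>auto simp: Z_def\<close>)
  then show ?thesis using abc by (simp add: Z_def)
qed


lemma sub_im_span:
  fixes C :: "real^'d^'m"
  shows "sub_im C S \<subseteq> span ((\<lambda>j. column j C) ` S)"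
proof
  fix v assume "v \<in> sub_im C S"
  then obtain w where w: "\<forall>j. j \<notin> S \<longrightarrow> w $ j = 0" "v = C *v w" by (auto simp: sub_im_def)
  have "v = (\<Sum>j\<in>UNIV. w $ j *s column j C)" using w by (simp add: matrix_mult_sum)
  also have "\<dots> = (\<Sum>j\<in>S. w $ j *s column j C)"
    by (rule sum.mono_neutral_right) (use w in auto)
  also have "\<dots> = (\<Sum>j\<in>S. w $ j *\<^sub>R column j C)" by (simp add: scalar_mult_eq_scaleR)
  also have "\<dots> \<in> span ((\<lambda>j. column j C) ` S)"
    by (intro span_sum span_mul span_base) auto
  finally show "v \<in> span ((\<lambda>j. column j C) ` S)" .
qed

lemma sub_rank_le:
  fixes C :: "real^'d^'m"
  shows "sub_rank C S \<le> card S"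
proof -
  have "sub_rank C S \<le> card ((\<lambda>j. column j C) ` S)"
    unfolding sub_rank_def by (rule dim_le_card[OF sub_im_span]) simp
  also have "\<dots> \<le> card S" by (rule card_image_le) simp
  finally show ?thesis .
qed

lemma sub_im_mem:
  fixes C :: "real^'d^'m"
  assumes "\<forall>j. j \<notin> S \<longrightarrow> w $ j = 0"
  shows "C *v w \<in> sub_im C S"
  using assms by (auto simp: sub_im_def)

lemma sub_rank_inj:
  fixes C :: "real^'d^'m"
  assumes r: "sub_rank C S = card S" and w: "\<forall>j. j \<notin> S \<longrightarrow> w $ j = 0" and z: "C *v w = 0"
  shows "w = 0"
proof -
  define col where "col = (\<lambda>j. column j C)"
  define T where "T = col ` S"
  have fT: "finite T" unfolding T_def by simp
  have "card S = dim (sub_im C S)" using r by (simp add: sub_rank_def)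
  also have "\<dots> \<le> dim (span T)" unfolding T_def col_def by (rule dim_subset[OF sub_im_span])
  also have "\<dots> = dim T" by simp
  finally have 1: "card S \<le> dim T" .
  have 2: "dim T \<le> card T" using fT by (rule dim_le_card')
  have 3: "card T \<le> card S" unfolding T_def by (rule card_image_le) simp
  have cT: "card T = card S" and dT: "card T = dim T" using 1 2 3 by auto
  have indep: "independent T"
    using card_eq_dim[OF subset_refl dT fT] span_superset by blast
  have inj: "inj_on col S" using cT unfolding T_def by (intro eq_card_imp_inj_on) auto
  define c where "c = (\<lambda>v. w $ the_inv_into S col v)"
  have "0 = C *v w" using z by simp
  also have "\<dots> = (\<Sum>j\<in>UNIV. w $ j *s column j C)" by (simp add: matrix_mult_sum)
  also have "\<dots> = (\<Sum>j\<in>S. w $ j *s column j C)"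
    by (rule sum.mono_neutral_right) (use w in auto)
  also have "\<dots> = (\<Sum>j\<in>S. c (col j) *\<^sub>R col j)"
  proof (rule sum.cong[OF refl])
    fix j assume j: "j \<in> S"
    have "the_inv_into S col (col j) = j" by (rule the_inv_into_f_f[OF inj j])
    then show "w $ j *s column j C = c (col j) *\<^sub>R col j"
      by (simp add: c_def scalar_mult_eq_scaleR col_def)
  qed
  also have "\<dots> = (\<Sum>v\<in>T. c v *\<^sub>R v)"
    unfolding T_def by (simp add: sum.reindex[OF inj])
  finally have "(\<Sum>v\<in>T. c v *\<^sub>R v) = 0" by simp
  then have "\<forall>v\<in>T. c v = 0" using indep by (auto simp: independent_explicit)
  then have "w $ j = 0" if "j \<in> S" for j
    using that inj by (auto simp: T_def c_def the_inv_into_f_f)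
  then show "w = 0" using w by (auto simp: vec_eq_iff)
qed

lemma comb:
  fixes C :: "real^'d^'m" and \<beta>s :: "real^'d"
  assumes BB: "BB = {\<beta>. C *v \<beta> = C *v \<beta>s}"
  defines "PA \<equiv> supp_vec \<beta>s"
  shows
    "(sub_rank C PA = card PA \<and>
      (\<forall>S. sub_rank C S \<le> sub_rank C PA \<and> sub_im C S \<noteq> sub_im C PA \<longrightarrow>
            C *v restr PA \<beta>s \<notin> sub_im C S)
      \<longrightarrow> \<beta>s \<in> BB \<and> (\<forall>\<beta>\<in>BB. l0 \<beta>s \<le> l0 \<beta>))
     \<and>
     (sub_rank C PA = card PA \<and>
      (\<forall>S. sub_rank C S \<le> sub_rank C PA \<and> sub_im C S \<noteq> sub_im C PA \<longrightarrow>
            C *v restr PA \<beta>s \<notin> sub_im C S) \<and>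
      (\<forall>S. card S = card PA \<and> S \<noteq> PA \<longrightarrow> sub_im C S \<noteq> sub_im C PA)
      \<longrightarrow> \<beta>s \<in> BB \<and> (\<forall>\<beta>\<in>BB. l0 \<beta>s \<le> l0 \<beta>) \<and>
          (\<forall>\<beta>\<in>BB. l0 \<beta> \<le> l0 \<beta>s \<longrightarrow> \<beta> = \<beta>s))"
proof -
  have rs: "restr PA \<beta>s = \<beta>s" by (auto simp: restr_def PA_def supp_vec_def vec_eq_iff)
  have l0s: "l0 \<beta>s = card PA" by (simp add: l0_def PA_def)
  have key: "sub_im C (supp_vec \<beta>) = sub_im C PA \<and> card PA \<le> l0 \<beta>"
    if A1: "sub_rank C PA = card PA"
      and A2: "\<forall>S. sub_rank C S \<le> sub_rank C PA \<and> sub_im C S \<noteq> sub_im C PA \<longrightarrow>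
            C *v restr PA \<beta>s \<notin> sub_im C S"
      and b: "\<beta> \<in> BB" and le: "l0 \<beta> \<le> card PA" for \<beta>
  proof -
    let ?S = "supp_vec \<beta>"
    have "C *v \<beta> \<in> sub_im C ?S"
      by (rule sub_im_mem) (auto simp: supp_vec_def)
    then have "C *v restr PA \<beta>s \<in> sub_im C ?S"
      using b rs BB by simp
    moreover have "sub_rank C ?S \<le> sub_rank C PA"
      using sub_rank_le[of C ?S] le A1 by (simp add: l0_def)
    ultimately have eq: "sub_im C ?S = sub_im C PA" using A2 by blast
    then have "card PA \<le> card ?S" using sub_rank_le[of C ?S] A1 by (simp add: sub_rank_def)
    then show ?thesis using eq by (simp add: l0_def)
  qed
  have part1: "\<beta>s \<in> BB \<and> (\<forall>\<beta>\<in>BB. l0 \<beta>s \<le> l0 \<beta>)"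
    if A1: "sub_rank C PA = card PA"
      and A2: "\<forall>S. sub_rank C S \<le> sub_rank C PA \<and> sub_im C S \<noteq> sub_im C PA \<longrightarrow>
            C *v restr PA \<beta>s \<notin> sub_im C S"
  proof
    show "\<beta>s \<in> BB" using BB by simp
    show "\<forall>\<beta>\<in>BB. l0 \<beta>s \<le> l0 \<beta>"
    proof
      fix \<beta> assume b: "\<beta> \<in> BB"
      show "l0 \<beta>s \<le> l0 \<beta>"
      proof (cases "l0 \<beta> \<le> card PA")
        case True then show ?thesis using key[OF A1 A2 b True] l0s by simp
      qed (use l0s in simp)
    qed
  qed
  have part2: "\<forall>\<beta>\<in>BB. l0 \<beta> \<le> l0 \<beta>s \<longrightarrow> \<beta> = \<beta>s"
    if A1: "sub_rank C PA = card PA"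
      and A2: "\<forall>S. sub_rank C S \<le> sub_rank C PA \<and> sub_im C S \<noteq> sub_im C PA \<longrightarrow>
            C *v restr PA \<beta>s \<notin> sub_im C S"
      and A3: "\<forall>S. card S = card PA \<and> S \<noteq> PA \<longrightarrow> sub_im C S \<noteq> sub_im C PA"
  proof (intro ballI impI)
    fix \<beta> assume b: "\<beta> \<in> BB" and le: "l0 \<beta> \<le> l0 \<beta>s"
    have k: "sub_im C (supp_vec \<beta>) = sub_im C PA \<and> card PA \<le> l0 \<beta>"
      using key[OF A1 A2 b] le l0s by simp
    then have "card (supp_vec \<beta>) = card PA" using le l0s by (simp add: l0_def)
    then have S: "supp_vec \<beta> = PA" using A3 k by blast
    have "\<beta> - \<beta>s = 0"
    proof (rule sub_rank_inj[OF A1])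
      show "\<forall>j. j \<notin> PA \<longrightarrow> (\<beta> - \<beta>s) $ j = 0"
        using S by (auto simp: PA_def supp_vec_def)
      show "C *v (\<beta> - \<beta>s) = 0" using b BB by (simp add: matrix_vector_mult_diff_distrib)
    qed
    then show "\<beta> = \<beta>s" by simp
  qed
  show ?thesis using part1 part2 by blast
qed


definition cv :: "'w measure \<Rightarrow> ('w \<Rightarrow> real) \<Rightarrow> ('w \<Rightarrow> real) \<Rightarrow> real" where
  "cv M u V = (\<integral>\<omega>. u \<omega> * V \<omega> \<partial>M) - (\<integral>\<omega>. u \<omega> \<partial>M) * (\<integral>\<omega>. V \<omega> \<partial>M)"

definition good :: "'w measure \<Rightarrow> ('w \<Rightarrow> real) \<Rightarrow> ('w \<Rightarrow> real) \<Rightarrow> bool" where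
  "good M u V \<longleftrightarrow> integrable M V \<and> integrable M (\<lambda>\<omega>. u \<omega> * V \<omega>)"

lemma cov_eq:
  assumes P: "prob_space M" and iu: "integrable M u" and g: "good M u V"
  shows "(\<integral>\<omega>. (u \<omega> - (\<integral>\<omega>. u \<omega> \<partial>M)) * (V \<omega> - (\<integral>\<omega>. V \<omega> \<partial>M)) \<partial>M) = cv M u V"
proof -
  define a where "a = (\<integral>\<omega>. u \<omega> \<partial>M)"
  define b where "b = (\<integral>\<omega>. V \<omega> \<partial>M)"
  have iV: "integrable M V" and iuV: "integrable M (\<lambda>\<omega>. u \<omega> * V \<omega>)" using g by (auto simp: good_def)
  have e: "(\<lambda>\<omega>. (u \<omega> - a) * (V \<omega> - b)) = (\<lambda>\<omega>. (u \<omega> * V \<omega> - (b * u \<omega> + a * V \<omega>)) + a * b)"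
    by (auto simp: algebra_simps)
  have "(\<integral>\<omega>. (u \<omega> - a) * (V \<omega> - b) \<partial>M) = (\<integral>\<omega>. u \<omega> * V \<omega> \<partial>M) - (b * a + a * b) + a * b"
  proof -
    interpret prob_space M by (rule P)
    have i1: "integrable M (\<lambda>\<omega>. u \<omega> * V \<omega> - (b * u \<omega> + a * V \<omega>))"
      using iu iV iuV by auto
    have i2: "integrable M (\<lambda>\<omega>. b * u \<omega> + a * V \<omega>)" using iu iV by auto
    have s1: "(\<integral>\<omega>. (u \<omega> * V \<omega> - (b * u \<omega> + a * V \<omega>)) + a * b \<partial>M)
        = (\<integral>\<omega>. u \<omega> * V \<omega> - (b * u \<omega> + a * V \<omega>) \<partial>M) + a * b"
      by (subst Bochner_Integration.integral_add[OF i1]) (auto simp: prob_space)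
    have s2: "(\<integral>\<omega>. u \<omega> * V \<omega> - (b * u \<omega> + a * V \<omega>) \<partial>M)
        = (\<integral>\<omega>. u \<omega> * V \<omega> \<partial>M) - (\<integral>\<omega>. b * u \<omega> + a * V \<omega> \<partial>M)"
      by (rule Bochner_Integration.integral_diff[OF iuV i2])
    have s3: "(\<integral>\<omega>. b * u \<omega> + a * V \<omega> \<partial>M) = b * a + a * b"
      using iu iV by (simp add: a_def b_def)
    show ?thesis unfolding e s1 s2 s3 by simp
  qed
  then show ?thesis by (simp add: cv_def a_def b_def)
qed

lemma good_cong:
  assumes "\<forall>\<omega>\<in>space M. V \<omega> = W \<omega>"
  shows "good M u V = good M u W" "cv M u V = cv M u W"
proof -
  have "integrable M V = integrable M W" by (rule Bochner_Integration.integrable_cong[OF refl]) (use assms in auto)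
  moreover have "integrable M (\<lambda>\<omega>. u \<omega> * V \<omega>) = integrable M (\<lambda>\<omega>. u \<omega> * W \<omega>)"
    by (rule Bochner_Integration.integrable_cong[OF refl]) (use assms in auto)
  ultimately show "good M u V = good M u W" by (simp add: good_def)
  have "(\<integral>\<omega>. V \<omega> \<partial>M) = (\<integral>\<omega>. W \<omega> \<partial>M)" by (rule Bochner_Integration.integral_cong[OF refl]) (use assms in auto)
  moreover have "(\<integral>\<omega>. u \<omega> * V \<omega> \<partial>M) = (\<integral>\<omega>. u \<omega> * W \<omega> \<partial>M)"
    by (rule Bochner_Integration.integral_cong[OF refl]) (use assms in auto)
  ultimately show "cv M u V = cv M u W" by (simp add: cv_def)
qed

lemma good_add:
  assumes "good M u V" "good M u W"
  shows "good M u (\<lambda>\<omega>. V \<omega> + W \<omega>)" "cv M u (\<lambda>\<omega>. V \<omega> + W \<omega>) = cv M u V + cv M u W"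
  using assms by (auto simp: good_def cv_def distrib_left algebra_simps)

lemma good_diff:
  assumes "good M u V" "good M u W"
  shows "good M u (\<lambda>\<omega>. V \<omega> - W \<omega>)" "cv M u (\<lambda>\<omega>. V \<omega> - W \<omega>) = cv M u V - cv M u W"
  using assms by (auto simp: good_def cv_def right_diff_distrib algebra_simps)

lemma good_sum:
  assumes "finite L" "\<And>l. l \<in> L \<Longrightarrow> good M u (F l)"
  shows "good M u (\<lambda>\<omega>. \<Sum>l\<in>L. c l * F l \<omega>)"
    "cv M u (\<lambda>\<omega>. \<Sum>l\<in>L. c l * F l \<omega>) = (\<Sum>l\<in>L. c l * cv M u (F l))"
proof -
  have e: "(\<lambda>\<omega>. u \<omega> * (\<Sum>l\<in>L. c l * F l \<omega>)) = (\<lambda>\<omega>. \<Sum>l\<in>L. c l * (u \<omega> * F l \<omega>))"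
    by (auto simp: sum_distrib_left algebra_simps)
  show "good M u (\<lambda>\<omega>. \<Sum>l\<in>L. c l * F l \<omega>)"
    using assms unfolding good_def e by auto
  show "cv M u (\<lambda>\<omega>. \<Sum>l\<in>L. c l * F l \<omega>) = (\<Sum>l\<in>L. c l * cv M u (F l))"
    using assms unfolding cv_def e good_def
    by (simp add: integral_sum sum_distrib_left sum_subtractf algebra_simps)
qed

theorem theorem1:
  fixes M :: "'w measure"
    and NX :: "'ex measure" and NY :: "'ey measure"
    and X :: "'w \<Rightarrow> real^'d" and Y :: "'w \<Rightarrow> real"
    and H :: "'w \<Rightarrow> real^'q" and I :: "'w \<Rightarrow> real^'m"
    and eX :: "'w \<Rightarrow> 'ex" and eY :: "'w \<Rightarrow> 'ey"
    and B :: "real^'d^'d" and A :: "real^'m^'d" and \<beta>s :: "real^'d"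
    and h :: "(real^'q) \<times> 'ex \<Rightarrow> real^'d" and g :: "(real^'q) \<times> 'ey \<Rightarrow> real"
  assumes P: "prob_space M"
    and hmeas: "h \<in> borel_measurable (borel \<Otimes>\<^sub>M NX)"
    and gmeas: "g \<in> borel_measurable (borel \<Otimes>\<^sub>M NY)"
    and Xmeas: "X \<in> borel_measurable M" and Ymeas: "Y \<in> borel_measurable M"
    and indep: "prob_space.indep4 M borel I borel H NX eX NY eY"
    and SCM_X: "\<forall>\<omega>\<in>space M. X \<omega> = B *v X \<omega> + A *v I \<omega> + h (H \<omega>, eX \<omega>)"
    and SCM_Y: "\<forall>\<omega>\<in>space M. Y \<omega> = X \<omega> \<bullet> \<beta>s + g (H \<omega>, eY \<omega>)"
    and invB: "invertible (mat 1 - B)"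
    and covI_ex: "\<forall>i k. integrable M (\<lambda>\<omega>. I \<omega> $ i) \<and> integrable M (\<lambda>\<omega>. I \<omega> $ i * I \<omega> $ k)"
    and covIX_ex: "\<forall>i j. integrable M (\<lambda>\<omega>. X \<omega> $ j) \<and> integrable M (\<lambda>\<omega>. I \<omega> $ i * X \<omega> $ j)"
    and covIY_ex: "integrable M Y \<and> (\<forall>i. integrable M (\<lambda>\<omega>. I \<omega> $ i * Y \<omega>))"
    and covI_inv: "invertible (cross_cov M I I)"
  defines "C \<equiv> transpose A ** transpose (matrix_inv (mat 1 - B))"
    and "PA \<equiv> supp_vec \<beta>s"
    and "\<B> \<equiv> {\<beta>. cross_cov M I X *v \<beta> = cross_cov_vec M I Y}"
  shows
    "(sub_rank C PA = card PA \<and>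
      (\<forall>S. sub_rank C S \<le> sub_rank C PA \<and> sub_im C S \<noteq> sub_im C PA \<longrightarrow>
            C *v restr PA \<beta>s \<notin> sub_im C S)
      \<longrightarrow> \<beta>s \<in> \<B> \<and> (\<forall>\<beta>\<in>\<B>. l0 \<beta>s \<le> l0 \<beta>))
     \<and>
     (sub_rank C PA = card PA \<and>
      (\<forall>S. sub_rank C S \<le> sub_rank C PA \<and> sub_im C S \<noteq> sub_im C PA \<longrightarrow>
            C *v restr PA \<beta>s \<notin> sub_im C S) \<and>
      (\<forall>S. card S = card PA \<and> S \<noteq> PA \<longrightarrow> sub_im C S \<noteq> sub_im C PA)
      \<longrightarrow> \<beta>s \<in> \<B> \<and> (\<forall>\<beta>\<in>\<B>. l0 \<beta>s \<le> l0 \<beta>) \<and>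
          (\<forall>\<beta>\<in>\<B>. l0 \<beta> \<le> l0 \<beta>s \<longrightarrow> \<beta> = \<beta>s))"
proof -
  interpret prob_space M by (rule P)
  define E where "E = (\<lambda>i::nat.
        if i = 0 then { I -` A \<inter> space M | A. A \<in> sets (borel :: (real^'m) measure)}
        else if i = 1 then { H -` A \<inter> space M | A. A \<in> sets (borel :: (real^'q) measure)}
        else if i = 2 then { eX -` A \<inter> space M | A. A \<in> sets NX}
        else { eY -` A \<inter> space M | A. A \<in> sets NY})"
  have rI: "random_variable borel I" and rH: "random_variable borel H"
    and reX: "random_variable NX eX" and reY: "random_variable NY eY"
    and ind: "indep_sets E {0,1,2,3}"
    using indep unfolding indep4_def E_def by auto
  note [measurable] = rI rH reX reY hmeas gmeas Xmeas Ymeas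
  define hh where "hh = (\<lambda>\<omega>. h (H \<omega>, eX \<omega>))"
  define gg where "gg = (\<lambda>\<omega>. g (H \<omega>, eY \<omega>))"
  define N where "N = matrix_inv (mat 1 - B)"
  have NB: "N ** (mat 1 - B) = mat 1"
    using invB unfolding N_def matrix_inv_def invertible_def by (rule someI2_ex) auto
  define u where "u = (\<lambda>i \<omega>. I \<omega> $ i)"
  have iu: "integrable M (u i)" for i using covI_ex by (simp add: u_def)
  have gI: "good M (u i) (\<lambda>\<omega>. I \<omega> $ l)" for i l using covI_ex by (simp add: u_def good_def)
  have gX: "good M (u i) (\<lambda>\<omega>. X \<omega> $ j)" for i j using covIX_ex by (simp add: u_def good_def)
  have gY: "good M (u i) Y" for i using covIY_ex by (simp add: u_def good_def)
  have hh_eq: "\<forall>\<omega>\<in>space M. hh \<omega> $ k = X \<omega> $ k - (\<Sum>l\<in>UNIV. B$k$l * X \<omega> $ l) - (\<Sum>l\<in>UNIV. A$k$l * I \<omega> $ l)" for k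
  proof
    fix \<omega> assume "\<omega> \<in> space M"
    then have "hh \<omega> = X \<omega> - B *v X \<omega> - A *v I \<omega>" using SCM_X by (simp add: hh_def algebra_simps)
    then show "hh \<omega> $ k = X \<omega> $ k - (\<Sum>l\<in>UNIV. B$k$l * X \<omega> $ l) - (\<Sum>l\<in>UNIV. A$k$l * I \<omega> $ l)"
      by (simp add: matrix_vector_mult_def)
  qed
  have gh: "good M (u i) (\<lambda>\<omega>. hh \<omega> $ k)" for i k
    unfolding good_cong(1)[OF hh_eq]
    by (intro good_diff good_sum gX gI) auto
  have ch: "cv M (u i) (\<lambda>\<omega>. hh \<omega> $ k) = 0" for i k
  proof -
    have "(\<integral>\<omega>. (\<lambda>x. x $ i) (I \<omega>) * (\<lambda>p. h p $ k) (H \<omega>, eX \<omega>) \<partial>M)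
        = (\<integral>\<omega>. (\<lambda>x. x $ i) (I \<omega>) \<partial>M) * (\<integral>\<omega>. (\<lambda>p. h p $ k) (H \<omega>, eX \<omega>) \<partial>M)"
      using measurable_compose[OF hmeas, of "\<lambda>x. x $ k" borel]
      by (intro indep_comp[OF ind, of 0 1 2 I borel H borel eX NX])
        (use iu gh in \<open>auto simp: E_def u_def hh_def good_def\<close>)
    then show ?thesis by (simp add: cv_def u_def hh_def)
  qed
  have X_eq: "\<forall>\<omega>\<in>space M. X \<omega> $ j = (\<Sum>l\<in>UNIV. (N**A)$j$l * I \<omega> $ l) + (\<Sum>k\<in>UNIV. N$j$k * hh \<omega> $ k)" for j
  proof
    fix \<omega> assume w: "\<omega> \<in> space M"
    have "(mat 1 - B) *v X \<omega> = A *v I \<omega> + hh \<omega>"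
      using SCM_X w by (simp add: hh_def matrix_vector_mult_diff_rdistrib algebra_simps)
    then have "X \<omega> = N *v (A *v I \<omega> + hh \<omega>)"
      by (metis NB matrix_vector_mul_assoc matrix_vector_mul_lid)
    also have "\<dots> = (N ** A) *v I \<omega> + N *v hh \<omega>"
      by (simp add: matrix_vector_right_distrib matrix_vector_mul_assoc)
    finally show "X \<omega> $ j = (\<Sum>l\<in>UNIV. (N**A)$j$l * I \<omega> $ l) + (\<Sum>k\<in>UNIV. N$j$k * hh \<omega> $ k)"
      by (simp add: matrix_vector_mult_def)
  qed
  have cX: "cv M (u i) (\<lambda>\<omega>. X \<omega> $ j) = (\<Sum>l\<in>UNIV. (N**A)$j$l * cv M (u i) (\<lambda>\<omega>. I \<omega> $ l))" for i j
    unfolding good_cong(2)[OF X_eq]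
    by (subst good_add(2)) (auto intro!: good_sum gI gh simp: good_sum(2) gI gh ch)
  have gg_eq: "\<forall>\<omega>\<in>space M. gg \<omega> = Y \<omega> - (\<Sum>j\<in>UNIV. \<beta>s$j * X \<omega> $ j)"
    using SCM_Y by (simp add: gg_def inner_vec_def mult.commute)
  have gG: "good M (u i) gg" for i
    unfolding good_cong(1)[OF gg_eq]
    by (intro good_diff good_sum gX gY) auto
  have cg: "cv M (u i) gg = 0" for i
  proof -
    have "(\<integral>\<omega>. (\<lambda>x. x $ i) (I \<omega>) * g (H \<omega>, eY \<omega>) \<partial>M)
        = (\<integral>\<omega>. (\<lambda>x. x $ i) (I \<omega>) \<partial>M) * (\<integral>\<omega>. g (H \<omega>, eY \<omega>) \<partial>M)"
      by (rule indep_comp[OF ind, of 0 1 3 I borel H borel eY NY])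
        (use iu gG in \<open>auto simp: E_def u_def gg_def good_def\<close>)
    then show ?thesis by (simp add: cv_def u_def gg_def)
  qed
  have Y_eq: "\<forall>\<omega>\<in>space M. Y \<omega> = (\<Sum>j\<in>UNIV. \<beta>s$j * X \<omega> $ j) + gg \<omega>"
    using gg_eq by simp
  have cY: "cv M (u i) Y = (\<Sum>j\<in>UNIV. \<beta>s$j * cv M (u i) (\<lambda>\<omega>. X \<omega> $ j))" for i
    unfolding good_cong(2)[OF Y_eq]
    by (subst good_add(2)) (auto intro!: good_sum gX gG simp: good_sum(2) gX cg)
  have covII: "cross_cov M I I $ i $ l = cv M (u i) (\<lambda>\<omega>. I \<omega> $ l)" for i l
    using cov_eq[OF P iu gI] by (simp add: cross_cov_def u_def)
  have covIX: "cross_cov M I X $ i $ j = cv M (u i) (\<lambda>\<omega>. X \<omega> $ j)" for i j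
    using cov_eq[OF P iu gX] by (simp add: cross_cov_def u_def)
  have covIY: "cross_cov_vec M I Y $ i = cv M (u i) Y" for i
    using cov_eq[OF P iu gY] by (simp add: cross_cov_vec_def u_def)
  have Cent: "C $ l $ j = (N ** A) $ j $ l" for l j
    unfolding C_def N_def[symmetric] matrix_transpose_mul[symmetric] by (simp add: transpose_def)
  have KC: "cross_cov M I X = cross_cov M I I ** C"
    by (simp add: vec_eq_iff matrix_matrix_mult_def covIX covII cX Cent mult.commute)
  have KY: "cross_cov_vec M I Y = cross_cov M I I ** C *v \<beta>s"
    unfolding KC[symmetric]
    by (simp add: vec_eq_iff matrix_vector_mult_def covIX covIY cY mult.commute)
  obtain K' where K': "K' ** cross_cov M I I = mat 1"
    using covI_inv invertible_left_inverse by blast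
  have BB: "\<B> = {\<beta>. C *v \<beta> = C *v \<beta>s}"
  proof -
    have "(cross_cov M I I ** C *v \<beta> = cross_cov M I I ** C *v \<beta>s) \<longleftrightarrow> C *v \<beta> = C *v \<beta>s" for \<beta>
      by (metis K' matrix_vector_mul_assoc matrix_vector_mul_lid)
    then show ?thesis unfolding \<B>_def KC KY by simp
  qed
  show ?thesis unfolding PA_def by (rule comb[OF BB])
qed

end
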